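(* Let $f:\mathbb{R}^d\to\mathbb{R}$ be bounded below by $f^*$ (i.e. $f(x)\ge f^*$ for all $x$) and smooth with non-negative constants $L_1,\dots,L_d$, i.e. $$f(y)\le f(x)+\langle\nabla f(x),y-x\rangle+\sum_{i=1}^d\frac{L_i}{2}(y_i-x_i)^2\quad\text{for all }x,y\in\mathbb{R}^d,$$ and let $\bar L:=\frac1d\sum_{i=1}^d L_i$. Suppose the Success Probability Bounds (SPB) assumption holds. Consider single-node signSGD with Option 1: starting from $x_0\in\mathbb{R}^d$, $x_{k+1}=x_k-\gamma_k\,\mathrm{sign}\,\hat g(x_k)$, where at each iteration $\hat g(x_k)$ is a fresh draw of the estimator at the current point $x_k$. (a) If $\gamma_k=\gamma_0/\sqrt{k+1}$ with $\gamma_0>0$, then for every integer $K\ge 2$, $$\min_{0\le k<K}\mathbb{E}\|\nabla f(x_k)\|_\rho\le\frac{f(x_0)-f^*}{\gamma_0\sqrt K}+\frac{3\gamma_0 d\bar L}{2}\frac{\log K}{\sqrt K}$$ ($\log$ is the natural logarithm). (b) If $\gamma_k\equiv\gamma>0$, then for every $K\ge1$, $$\frac1K\sum_{k=0}^{K-1}\mathbb{E}\|\nabla f(x_k)\|_\rho\le\frac{f(x_0)-f^*}{\gamma K}+\frac{\gamma d\bar L}{2}.$$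
   Context: Notation: $g(x):=\nabla f(x)$. For $t\in\mathbb{R}$, $\mathrm{sign}\,t=1$ if $t>0$, $0$ if $t=0$, $-1$ if $t<0$; for vectors sign is applied entrywise. SPB assumption: for every $x\in\mathbb{R}^d$ one has access to an independent (not necessarily unbiased) random estimator $\hat g(x)\in\mathbb{R}^d$ of $g(x)$ such that for every $i\in\{1,\dots,d\}$ with $g_i(x)\neq0$, the success probability $\rho_i(x):=\mathrm{Prob}(\mathrm{sign}\,\hat g_i(x)=\mathrm{sign}\,g_i(x))$ satisfies $\rho_i(x)>\tfrac12$. The $\rho$-norm is $\|g(x)\|_\rho:=\sum_{i=1}^d(2\rho_i(x)-1)|g_i(x)|$ (terms with $g_i(x)=0$ vanish). Expectations are over all randomness of the algorithm. *)

theory Defs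
  imports "HOL-Probability.Probability"
begin

text \<open>Entrywise sign of a vector (note: the library's sgn on vectors is normalisation,
  so we define the entrywise version explicitly).\<close>
definition signv :: "real^'n \<Rightarrow> real^'n" where
  "signv v = (\<chi> i. sgn (v $ i))"

text \<open>Success probability rho_i(x) = Prob(sign ghat_i(x) = sign g_i(x)),
  where G x is the law of the estimator ghat(x) and g is the gradient.\<close>
definition succ_prob :: "(real^'n \<Rightarrow> (real^'n) measure) \<Rightarrow> (real^'n \<Rightarrow> real^'n) \<Rightarrow> real^'n \<Rightarrow> 'n \<Rightarrow> real" where
  "succ_prob G g x i = measure (G x) {v \<in> space (G x). sgn (v $ i) = sgn (g x $ i)}"

definition rho_norm :: "(real^'n \<Rightarrow> (real^'n) measure) \<Rightarrow> (real^'n \<Rightarrow> real^'n) \<Rightarrow> real^'n \<Rightarrow> real" where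
  "rho_norm G g x = (\<Sum>i\<in>UNIV. (2 * succ_prob G g x i - 1) * \<bar>g x $ i\<bar>)"

primrec signsgd_law :: "(real^'n \<Rightarrow> (real^'n) measure) \<Rightarrow> real^'n \<Rightarrow> (nat \<Rightarrow> real) \<Rightarrow> nat \<Rightarrow> (real^'n) measure" where
  "signsgd_law G x0 \<gamma> 0 = return borel x0"
| "signsgd_law G x0 \<gamma> (Suc k) =
     signsgd_law G x0 \<gamma> k \<bind> (\<lambda>x. distr (G x) borel (\<lambda>v. x - \<gamma> k *\<^sub>R signv v))"

definition exp_rho_norm :: "(real^'n \<Rightarrow> (real^'n) measure) \<Rightarrow> (real^'n \<Rightarrow> real^'n) \<Rightarrow> real^'n \<Rightarrow> (nat \<Rightarrow> real) \<Rightarrow> nat \<Rightarrow> real" where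
  "exp_rho_norm G g x0 \<gamma> k = (\<integral>x. rho_norm G g x \<partial>(signsgd_law G x0 \<gamma> k))"

end

theory Submission imports Defs begin

lemma grad_comp_meas:
  fixes f :: "real^'n \<Rightarrow> real" and g :: "real^'n \<Rightarrow> real^'n"
  assumes grad: "\<And>x. (f has_derivative (\<lambda>h. g x \<bullet> h)) (at x)"
  shows "(\<lambda>x. g x $ i) \<in> borel_measurable borel"
proof -
  have fc: "continuous_on UNIV f"
    by (intro continuous_at_imp_continuous_on ballI has_derivative_continuous[OF grad])
  define F where "F n x = (f (x + inverse (real (Suc n)) *\<^sub>R axis i 1) - f (x + 0 *\<^sub>R axis i 1)) / inverse (real (Suc n))" for n x
  have Fm: "F n \<in> borel_measurable borel" for n
  proof -
    have c1: "continuous_on UNIV (\<lambda>x. f (x + c *\<^sub>R axis i 1))" for c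
      by (rule continuous_on_compose2[OF fc continuous_on_add[OF continuous_on_id continuous_on_const]]) simp
    have "continuous_on UNIV (F n)" unfolding F_def
      by (intro continuous_on_divide continuous_on_diff continuous_on_const c1) simp
    then show ?thesis by (rule borel_measurable_continuous_onI)
  qed
  have conv: "(\<lambda>n. F n x) \<longlonglongrightarrow> g x $ i" for x
  proof -
    have d: "((\<lambda>t. f (x + t *\<^sub>R axis i 1)) has_field_derivative (g x $ i)) (at 0)"
    proof -
      have h0: "((\<lambda>t::real. t *\<^sub>R axis i 1) has_derivative (\<lambda>t. t *\<^sub>R axis i 1)) (at 0)"
        by (rule bounded_linear_imp_has_derivative[OF bounded_linear_scaleR_left])
      have h1: "((\<lambda>t. x + t *\<^sub>R axis i 1) has_derivative (\<lambda>t. t *\<^sub>R axis i 1)) (at 0)"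
        using has_derivative_add[OF has_derivative_const[of x] h0] by simp
      have h2: "((\<lambda>t. f (x + t *\<^sub>R axis i 1)) has_derivative (\<lambda>t. g (x + 0 *\<^sub>R axis i 1) \<bullet> (t *\<^sub>R axis i 1))) (at 0)"
        by (rule has_derivative_compose[OF h1 grad[of "x + 0 *\<^sub>R axis i 1"]])
      have eq: "(\<lambda>t. g (x + 0 *\<^sub>R axis i 1) \<bullet> (t *\<^sub>R axis i 1)) = (*) (g x $ i)"
        by (rule ext) (simp add: inner_axis mult.commute)
      show ?thesis using h2 unfolding eq has_field_derivative_def .
    qed
    hence lim: "((\<lambda>h. (f (x + (0 + h) *\<^sub>R axis i 1) - f (x + 0 *\<^sub>R axis i 1)) / h) \<longlongrightarrow> g x $ i) (at 0)"
      unfolding DERIV_def .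
    have s: "filterlim (\<lambda>n. inverse (real (Suc n))) (at (0::real)) sequentially"
      unfolding filterlim_at using LIMSEQ_inverse_real_of_nat by simp
    have "(\<lambda>n. F n x) = (\<lambda>n. (f (x + (0 + inverse (real (Suc n))) *\<^sub>R axis i 1) - f (x + 0 *\<^sub>R axis i 1)) / inverse (real (Suc n)))"
      unfolding F_def by (rule ext) (simp only: add_0_left)
    then show ?thesis using filterlim_compose[OF lim s] by simp
  qed
  show ?thesis by (rule borel_measurable_LIMSEQ_real[OF conv Fm])
qed

lemma vec_nth_meas[measurable]: "(\<lambda>x::real^'n. x $ i) \<in> borel_measurable borel"
  by (intro borel_measurable_continuous_onI continuous_intros)

lemma signv_meas[measurable]: "(signv :: real^'n \<Rightarrow> real^'n) \<in> borel_measurable borel"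
proof (rule borel_measurable_euclidean_space[THEN iffD2], rule ballI)
  fix b :: "real^'n" assume "b \<in> Basis"
  then obtain i where b: "b = axis i 1" using axis_inverse by blast
  have eqs: "(\<lambda>x. signv x \<bullet> b) = (\<lambda>x. sgn (x $ i))"
    unfolding b signv_def by (rule ext) (simp add: inner_axis)
  show "(\<lambda>x. signv x \<bullet> b) \<in> borel_measurable borel" unfolding eqs by measurable
qed

context
  fixes f :: "real^'n \<Rightarrow> real"
    and g :: "real^'n \<Rightarrow> real^'n"
    and G :: "real^'n \<Rightarrow> (real^'n) measure"
    and L :: "'n \<Rightarrow> real"
    and fstar :: real
  assumes grad: "\<And>x. (f has_derivative (\<lambda>h. g x \<bullet> h)) (at x)"
    and lower: "\<And>x. f x \<ge> fstar"
    and L_nonneg: "\<And>i. L i \<ge> 0"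
    and smooth: "\<And>x y. f y \<le> f x + g x \<bullet> (y - x) + (\<Sum>i\<in>UNIV. L i / 2 * (y $ i - x $ i)^2)"
    and G_kernel: "G \<in> borel \<rightarrow>\<^sub>M prob_algebra borel"
    and SPB: "\<And>x i. g x $ i \<noteq> 0 \<Longrightarrow> succ_prob G g x i > 1/2"
begin

lemma f_meas[measurable]: "f \<in> borel_measurable borel"
  by (intro borel_measurable_continuous_onI continuous_at_imp_continuous_on ballI has_derivative_continuous[OF grad])

lemma gi_meas[measurable]: "(\<lambda>x. g x $ i) \<in> borel_measurable borel"
  by (rule grad_comp_meas[OF grad])

lemma G_sub: "G \<in> borel \<rightarrow>\<^sub>M subprob_algebra borel"
  using G_kernel by (rule measurable_prob_algebraD)

lemma G_sets: "sets (G x) = sets borel" and G_space: "space (G x) = UNIV"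
  using subprob_measurableD[OF G_sub, of x] by auto

lemma G_prob: "prob_space (G x)"
  using measurable_space[OF G_kernel, of x] by (auto simp: space_prob_algebra)

lemma succ_prob_alt: "succ_prob G g x i = measure (G x) {v. sgn (v $ i) = sgn (g x $ i)}"
  by (simp add: succ_prob_def G_space)

lemma succ_prob_meas[measurable]: "(\<lambda>x. succ_prob G g x i) \<in> borel_measurable borel"
proof -
  have "(\<lambda>x. measure (G x) {v. sgn (v $ i) = sgn (g x $ i)}) \<in> borel_measurable borel"
  proof (rule measure_measurable_prob_algebra2[OF _ G_kernel])
    have "Sigma (space borel) (\<lambda>x. {v. sgn (v $ i) = sgn (g x $ i)}) = 
      {z \<in> space (borel \<Otimes>\<^sub>M borel). sgn (snd z $ i) = sgn (g (fst z) $ i)}"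
      by (auto simp: space_pair_measure)
    also have "\<dots> \<in> sets (borel \<Otimes>\<^sub>M borel)" by measurable
    finally show "Sigma (space borel) (\<lambda>x. {v. sgn (v $ i) = sgn (g x $ i)}) \<in> sets (borel \<Otimes>\<^sub>M borel)" .
  qed
  then show ?thesis by (simp add: succ_prob_alt)
qed

lemma rho_meas[measurable]: "rho_norm G g \<in> borel_measurable borel"
  unfolding rho_norm_def by measurable

lemma rho_nonneg: "rho_norm G g x \<ge> 0"
  unfolding rho_norm_def
proof (rule sum_nonneg)
  fix i
  show "0 \<le> (2 * succ_prob G g x i - 1) * \<bar>g x $ i\<bar>"
    using SPB[of x i] by (cases "g x $ i = 0") auto
qed

lemma N_kernel: "(\<lambda>x. distr (G x) borel (\<lambda>v. x - c *\<^sub>R signv v)) \<in> borel \<rightarrow>\<^sub>M prob_algebra borel"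
  by (rule measurable_distr_prob_space2[OF G_kernel]) measurable

lemma law_space: "signsgd_law G x0 \<gamma> k \<in> space (prob_algebra borel)"
proof (induction k)
  case 0
  then show ?case using measurable_space[OF measurable_return_prob_space, of x0 borel] by simp
next
  case (Suc k)
  then show ?case
    using sets_bind'[OF Suc N_kernel] prob_space_bind'[OF Suc N_kernel]
    by (simp add: space_prob_algebra)
qed


lemma sgn_integrable: "integrable (G x) (\<lambda>v. sgn (v $ i))"
proof -
  interpret prob_space "G x" by (rule G_prob)
  show ?thesis
    by (rule integrable_const_bound[where B=1]) (auto simp: measurable_cong_sets[OF G_sets refl] abs_sgn_eq)
qed

lemma key_inner: "(2 * succ_prob G g x i - 1) * \<bar>g x $ i\<bar> \<le> g x $ i * (\<integral>v. sgn (v $ i) \<partial>G x)"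
proof -
  interpret prob_space "G x" by (rule G_prob)
  define A where "A = {v::real^'n. sgn (v $ i) = sgn (g x $ i)}"
  have A: "A \<in> sets (G x)" unfolding A_def G_sets by measurable
  have i00: "integrable (G x) (indicator A :: _ \<Rightarrow> real)"
    by (rule integrable_real_indicator[OF A]) (simp add: less_top[symmetric] emeasure_finite)
  have i0: "integrable (G x) (\<lambda>v. 2 * indicator A v - 1 :: real)"
    using i00 by (simp add: integrable_diff)
  have int1: "integrable (G x) (\<lambda>v. \<bar>g x $ i\<bar> * (2 * indicator A v - 1) :: real)"
    by (intro integrable_mult_right i0)
  have pw: "\<bar>g x $ i\<bar> * (2 * indicator A v - 1) \<le> g x $ i * sgn (v $ i)" for v
  proof (cases "v \<in> A")
    case True
    then have "sgn (v $ i) = sgn (g x $ i)" by (simp add: A_def)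
    then show ?thesis using True by (simp add: sgn_if abs_if)
  next
    case False
    have "\<bar>g x $ i * sgn (v $ i)\<bar> \<le> \<bar>g x $ i\<bar>"
      by (simp add: abs_mult abs_sgn_eq)
    then show ?thesis using False by simp
  qed
  have "(\<integral>v. \<bar>g x $ i\<bar> * (2 * indicator A v - 1) \<partial>G x) \<le> (\<integral>v. g x $ i * sgn (v $ i) \<partial>G x)"
    by (intro integral_mono int1 integrable_mult_right sgn_integrable pw)
  moreover have "(\<integral>v. \<bar>g x $ i\<bar> * (2 * indicator A v - 1) \<partial>G x) = (2 * succ_prob G g x i - 1) * \<bar>g x $ i\<bar>"
    using A i00 by (simp add: integral_diff prob_space succ_prob_alt A_def[symmetric] mult.commute)
  ultimately show ?thesis by (cases "g x $ i = 0") (auto simp: mult.commute)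
qed

lemma pointwise:
  assumes c: "c \<ge> 0"
  shows "(\<integral>\<^sup>+y. ennreal (f y - fstar) \<partial>distr (G x) borel (\<lambda>v. x - c *\<^sub>R signv v)) + ennreal (c * rho_norm G g x)
     \<le> ennreal (f x - fstar + c^2 * ((\<Sum>i\<in>UNIV. L i) / 2))"
proof -
  interpret prob_space "G x" by (rule G_prob)
  have Tm: "(\<lambda>v. x - c *\<^sub>R signv v) \<in> G x \<rightarrow>\<^sub>M borel"
    unfolding measurable_cong_sets[OF G_sets refl] by measurable
  define C where "C = (\<Sum>i\<in>UNIV. L i) / 2"
  define R where "R v = f x - fstar - c * (\<Sum>i\<in>UNIV. g x $ i * sgn (v $ i)) + c^2 * C" for v
  have pw: "f (x - c *\<^sub>R signv v) - fstar \<le> R v" for v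
  proof -
    have s1: "g x \<bullet> ((x - c *\<^sub>R signv v) - x) = - c * (\<Sum>i\<in>UNIV. g x $ i * sgn (v $ i))"
      by (simp add: inner_vec_def signv_def sum_distrib_left algebra_simps sum_negf)
    have s2: "(\<Sum>i\<in>UNIV. L i / 2 * ((x - c *\<^sub>R signv v) $ i - x $ i)^2) \<le> c^2 * C"
    proof -
      have "(\<Sum>i\<in>UNIV. L i / 2 * ((x - c *\<^sub>R signv v) $ i - x $ i)^2) \<le> (\<Sum>i\<in>UNIV. L i / 2 * c^2)"
      proof (rule sum_mono)
        fix i
        have "((x - c *\<^sub>R signv v) $ i - x $ i)^2 = c^2 * (sgn (v $ i))^2"
          by (simp add: signv_def power_mult_distrib)
        also have "\<dots> \<le> c^2 * 1"
          by (intro mult_left_mono) (auto simp: sgn_if)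
        finally show "L i / 2 * ((x - c *\<^sub>R signv v) $ i - x $ i)^2 \<le> L i / 2 * c^2"
          using L_nonneg[of i] by (intro mult_left_mono) auto
      qed
      also have "\<dots> = c^2 * C" unfolding C_def sum_distrib_left sum_divide_distrib by (simp add: mult_ac)
      finally show ?thesis .
    qed
    have sm: "f (x - c *\<^sub>R signv v) \<le> f x + g x \<bullet> ((x - c *\<^sub>R signv v) - x) + (\<Sum>i\<in>UNIV. L i / 2 * ((x - c *\<^sub>R signv v) $ i - x $ i)^2)"
      by (rule smooth)
    show ?thesis using sm s1 s2 unfolding R_def by linarith
  qed
  have Rnn: "0 \<le> R v" for v using pw[of v] lower[of "x - c *\<^sub>R signv v"] by linarith
  have Rint: "integrable (G x) R"
    unfolding R_def
    by (auto simp: sgn_integrable)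
  have intR: "(\<integral>v. R v \<partial>G x) = f x - fstar - c * (\<Sum>i\<in>UNIV. g x $ i * (\<integral>v. sgn (v $ i) \<partial>G x)) + c^2 * C"
  proof -
    have isum: "integrable (G x) (\<lambda>v. \<Sum>i\<in>UNIV. g x $ i * sgn (v $ i))"
      by (rule Bochner_Integration.integrable_sum) (auto simp: sgn_integrable)
    have i1: "integrable (G x) (\<lambda>v. c * (\<Sum>i\<in>UNIV. g x $ i * sgn (v $ i)))"
      using isum by auto
    have "(\<integral>v. R v \<partial>G x) = (\<integral>v. f x - fstar - c * (\<Sum>i\<in>UNIV. g x $ i * sgn (v $ i)) \<partial>G x) + c^2 * C"
      unfolding R_def
      by (subst Bochner_Integration.integral_add) (auto intro!: Bochner_Integration.integrable_diff i1 simp: prob_space)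
    also have "(\<integral>v. f x - fstar - c * (\<Sum>i\<in>UNIV. g x $ i * sgn (v $ i)) \<partial>G x)
       = f x - fstar - (\<integral>v. c * (\<Sum>i\<in>UNIV. g x $ i * sgn (v $ i)) \<partial>G x)"
      by (subst Bochner_Integration.integral_diff) (auto intro!: i1 isum simp: prob_space)
    also have "(\<integral>v. c * (\<Sum>i\<in>UNIV. g x $ i * sgn (v $ i)) \<partial>G x) = c * (\<Sum>i\<in>UNIV. g x $ i * (\<integral>v. sgn (v $ i) \<partial>G x))"
      by (subst integral_mult_right_zero, subst Bochner_Integration.integral_sum) (auto intro!: integrable_mult_right sgn_integrable)
    finally show ?thesis .
  qed
  have "rho_norm G g x \<le> (\<Sum>i\<in>UNIV. g x $ i * (\<integral>v. sgn (v $ i) \<partial>G x))"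
    unfolding rho_norm_def by (intro sum_mono key_inner)
  hence intR_le: "(\<integral>v. R v \<partial>G x) \<le> f x - fstar - c * rho_norm G g x + c^2 * C"
    unfolding intR using c by (simp add: mult_left_mono)
  have intR_nn: "0 \<le> (\<integral>v. R v \<partial>G x)" by (intro Bochner_Integration.integral_nonneg Rnn)
  have "(\<integral>\<^sup>+y. ennreal (f y - fstar) \<partial>distr (G x) borel (\<lambda>v. x - c *\<^sub>R signv v))
      = (\<integral>\<^sup>+v. ennreal (f (x - c *\<^sub>R signv v) - fstar) \<partial>G x)"
    by (rule nn_integral_distr[OF Tm]) measurable
  also have "\<dots> \<le> (\<integral>\<^sup>+v. ennreal (R v) \<partial>G x)"
    by (intro nn_integral_mono ennreal_leI pw)
  also have "\<dots> = ennreal (\<integral>v. R v \<partial>G x)"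
    by (rule nn_integral_eq_integral[OF Rint]) (simp add: Rnn)
  finally have 1: "(\<integral>\<^sup>+y. ennreal (f y - fstar) \<partial>distr (G x) borel (\<lambda>v. x - c *\<^sub>R signv v)) + ennreal (c * rho_norm G g x)
      \<le> ennreal (\<integral>v. R v \<partial>G x) + ennreal (c * rho_norm G g x)"
    by (rule add_right_mono)
  also have "\<dots> = ennreal ((\<integral>v. R v \<partial>G x) + c * rho_norm G g x)"
    using intR_nn c rho_nonneg[of x] by (simp add: ennreal_plus)
  also have "\<dots> \<le> ennreal (f x - fstar + c^2 * C)"
    using intR_le by (intro ennreal_leI) simp
  finally show ?thesis by (simp add: C_def)
qed


lemma step:
  assumes c: "c \<ge> 0" and M: "M \<in> space (prob_algebra borel)"
  shows "(\<integral>\<^sup>+y. ennreal (f y - fstar) \<partial>(M \<bind> (\<lambda>x. distr (G x) borel (\<lambda>v. x - c *\<^sub>R signv v))))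
      + ennreal c * (\<integral>\<^sup>+x. ennreal (rho_norm G g x) \<partial>M)
    \<le> (\<integral>\<^sup>+x. ennreal (f x - fstar) \<partial>M) + ennreal (c^2 * ((\<Sum>i\<in>UNIV. L i) / 2))"
proof -
  interpret prob_space M using M by (simp add: space_prob_algebra)
  have sM: "sets M = sets borel" using M by (simp add: space_prob_algebra)
  define C where "C = (\<Sum>i\<in>UNIV. L i) / 2"
  have C: "C \<ge> 0" unfolding C_def using L_nonneg by (simp add: sum_nonneg)
  define N where "N = (\<lambda>x. distr (G x) borel (\<lambda>v. x - c *\<^sub>R signv v))"
  have N: "N \<in> M \<rightarrow>\<^sub>M subprob_algebra borel"
    unfolding measurable_cong_sets[OF sM refl] N_def by (rule measurable_prob_algebraD[OF N_kernel])
  have hm: "(\<lambda>y. ennreal (f y - fstar)) \<in> borel_measurable borel" by measurable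
  have m1: "(\<lambda>x. \<integral>\<^sup>+y. ennreal (f y - fstar) \<partial>N x) \<in> borel_measurable M"
    by (rule measurable_compose[OF N nn_integral_measurable_subprob_algebra[OF hm]])
  have m2: "(\<lambda>x. ennreal (c * rho_norm G g x)) \<in> borel_measurable M"
    unfolding measurable_cong_sets[OF sM refl] by measurable
  have m3: "(\<lambda>x. ennreal (f x - fstar)) \<in> borel_measurable M"
    unfolding measurable_cong_sets[OF sM refl] by measurable
  have "(\<integral>\<^sup>+y. ennreal (f y - fstar) \<partial>(M \<bind> N)) = (\<integral>\<^sup>+x. \<integral>\<^sup>+y. ennreal (f y - fstar) \<partial>N x \<partial>M)"
    by (rule nn_integral_bind[OF hm N])
  moreover have "ennreal c * (\<integral>\<^sup>+x. ennreal (rho_norm G g x) \<partial>M) = (\<integral>\<^sup>+x. ennreal (c * rho_norm G g x) \<partial>M)"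
  proof -
    have m4: "(\<lambda>x. ennreal (rho_norm G g x)) \<in> borel_measurable M"
      unfolding measurable_cong_sets[OF sM refl] by measurable
    have "ennreal c * (\<integral>\<^sup>+x. ennreal (rho_norm G g x) \<partial>M) = (\<integral>\<^sup>+x. ennreal c * ennreal (rho_norm G g x) \<partial>M)"
      by (rule nn_integral_cmult[OF m4, symmetric])
    also have "\<dots> = (\<integral>\<^sup>+x. ennreal (c * rho_norm G g x) \<partial>M)"
      using c rho_nonneg by (simp add: ennreal_mult)
    finally show ?thesis .
  qed
  moreover have "(\<integral>\<^sup>+x. \<integral>\<^sup>+y. ennreal (f y - fstar) \<partial>N x \<partial>M) + (\<integral>\<^sup>+x. ennreal (c * rho_norm G g x) \<partial>M)
      = (\<integral>\<^sup>+x. (\<integral>\<^sup>+y. ennreal (f y - fstar) \<partial>N x) + ennreal (c * rho_norm G g x) \<partial>M)"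
    by (rule nn_integral_add[symmetric, OF m1 m2])
  moreover have "\<dots> \<le> (\<integral>\<^sup>+x. ennreal (f x - fstar + c^2 * C) \<partial>M)"
    unfolding N_def C_def by (intro nn_integral_mono pointwise c)
  moreover have "(\<integral>\<^sup>+x. ennreal (f x - fstar + c^2 * C) \<partial>M) = (\<integral>\<^sup>+x. ennreal (f x - fstar) + ennreal (c^2 * C) \<partial>M)"
    using lower C by (intro nn_integral_cong) (simp add: ennreal_plus)
  moreover have "\<dots> = (\<integral>\<^sup>+x. ennreal (f x - fstar) \<partial>M) + ennreal (c^2 * C)"
    by (subst nn_integral_add[OF m3]) (auto simp: emeasure_space_1)
  ultimately show ?thesis unfolding N_def C_def by simp
qed

lemma telescope:
  assumes pos: "\<And>k. \<gamma> k \<ge> 0"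
  shows "(\<integral>\<^sup>+y. ennreal (f y - fstar) \<partial>signsgd_law G x0 \<gamma> K)
     + (\<Sum>k<K. ennreal (\<gamma> k) * (\<integral>\<^sup>+x. ennreal (rho_norm G g x) \<partial>signsgd_law G x0 \<gamma> k))
    \<le> ennreal (f x0 - fstar) + (\<Sum>k<K. ennreal ((\<gamma> k)^2 * ((\<Sum>i\<in>UNIV. L i) / 2)))"
proof (induction K)
  case 0
  have hm: "(\<lambda>y. ennreal (f y - fstar)) \<in> borel_measurable borel" by measurable
  show ?case by (simp add: nn_integral_return[OF _ hm])
next
  case (Suc K)
  define A' where "A' = (\<integral>\<^sup>+y. ennreal (f y - fstar) \<partial>signsgd_law G x0 \<gamma> (Suc K))"
  define A where "A = (\<integral>\<^sup>+y. ennreal (f y - fstar) \<partial>signsgd_law G x0 \<gamma> K)"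
  define r where "r = ennreal (\<gamma> K) * (\<integral>\<^sup>+x. ennreal (rho_norm G g x) \<partial>signsgd_law G x0 \<gamma> K)"
  define c where "c = ennreal ((\<gamma> K)^2 * ((\<Sum>i\<in>UNIV. L i) / 2))"
  define S where "S = (\<Sum>k<K. ennreal (\<gamma> k) * (\<integral>\<^sup>+x. ennreal (rho_norm G g x) \<partial>signsgd_law G x0 \<gamma> k))"
  define T where "T = (\<Sum>k<K. ennreal ((\<gamma> k)^2 * ((\<Sum>i\<in>UNIV. L i) / 2)))"
  have st: "A' + r \<le> A + c"
    unfolding A'_def A_def r_def c_def signsgd_law.simps
    by (rule step[OF pos law_space])
  have ih: "A + S \<le> ennreal (f x0 - fstar) + T"
    using Suc.IH unfolding A_def S_def T_def .
  have "A' + (S + r) = (A' + r) + S" by (simp add: ac_simps)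
  also have "\<dots> \<le> (A + c) + S" using st by (rule add_right_mono)
  also have "\<dots> = (A + S) + c" by (simp add: ac_simps)
  also have "\<dots> \<le> (ennreal (f x0 - fstar) + T) + c" using ih by (rule add_right_mono)
  also have "\<dots> = ennreal (f x0 - fstar) + (T + c)" by (simp add: ac_simps)
  finally show ?case unfolding A'_def S_def r_def T_def c_def by simp
qed


lemma exp_nonneg: "exp_rho_norm G g x0 \<gamma> k \<ge> 0"
  unfolding exp_rho_norm_def by (intro Bochner_Integration.integral_nonneg rho_nonneg)

lemma real_bound:
  assumes pos: "\<And>k. \<gamma> k > 0"
  shows "(\<Sum>k<K. \<gamma> k * exp_rho_norm G g x0 \<gamma> k)
     \<le> f x0 - fstar + (\<Sum>k<K. (\<gamma> k)^2) * ((\<Sum>i\<in>UNIV. L i) / 2)"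
proof -
  define C where "C = (\<Sum>i\<in>UNIV. L i) / 2"
  have C: "C \<ge> 0" unfolding C_def using L_nonneg by (simp add: sum_nonneg)
  have pos': "\<And>k. \<gamma> k \<ge> 0" using pos less_imp_le by blast
  define r where "r k = (\<integral>\<^sup>+x. ennreal (rho_norm G g x) \<partial>signsgd_law G x0 \<gamma> k)" for k
  have fin: "r k < \<infinity>" for k
  proof -
    have T: "(\<integral>\<^sup>+y. ennreal (f y - fstar) \<partial>signsgd_law G x0 \<gamma> (Suc k))
     + (\<Sum>j<Suc k. ennreal (\<gamma> j) * r j)
    \<le> ennreal (f x0 - fstar) + (\<Sum>j<Suc k. ennreal ((\<gamma> j)^2 * C))"
      using telescope[where K="Suc k", OF pos'] unfolding r_def C_def .
    have "ennreal (\<gamma> k) * r k \<le> (\<Sum>j<Suc k. ennreal (\<gamma> j) * r j)"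
      by (rule member_le_sum) auto
    also have "\<dots> \<le> (\<integral>\<^sup>+y. ennreal (f y - fstar) \<partial>signsgd_law G x0 \<gamma> (Suc k)) + (\<Sum>j<Suc k. ennreal (\<gamma> j) * r j)"
      by simp
    also have "\<dots> \<le> ennreal (f x0 - fstar) + (\<Sum>j<Suc k. ennreal ((\<gamma> j)^2 * C))" by (rule T)
    also have "\<dots> < \<infinity>" by simp
    finally have "ennreal (\<gamma> k) * r k < \<infinity>" .
    then show ?thesis using pos[of k] by (auto simp: ennreal_mult_less_top)
  qed
  have conv: "r k = ennreal (exp_rho_norm G g x0 \<gamma> k)" for k
  proof -
    have sM: "sets (signsgd_law G x0 \<gamma> k) = sets borel"
      using law_space by (simp add: space_prob_algebra)
    have m: "rho_norm G g \<in> borel_measurable (signsgd_law G x0 \<gamma> k)"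
      unfolding measurable_cong_sets[OF sM refl] by measurable
    have int: "integrable (signsgd_law G x0 \<gamma> k) (rho_norm G g)"
      by (rule integrableI_nonneg[OF m]) (use fin[of k] rho_nonneg in \<open>auto simp: r_def\<close>)
    show ?thesis unfolding r_def exp_rho_norm_def
      by (rule nn_integral_eq_integral[OF int]) (simp add: rho_nonneg)
  qed
  have T: "(\<integral>\<^sup>+y. ennreal (f y - fstar) \<partial>signsgd_law G x0 \<gamma> K)
     + (\<Sum>k<K. ennreal (\<gamma> k) * r k)
    \<le> ennreal (f x0 - fstar) + (\<Sum>k<K. ennreal ((\<gamma> k)^2 * C))"
    using telescope[where K=K, OF pos'] unfolding r_def C_def .
  have "ennreal (\<Sum>k<K. \<gamma> k * exp_rho_norm G g x0 \<gamma> k) = (\<Sum>k<K. ennreal (\<gamma> k) * r k)"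
    using pos' exp_nonneg by (simp add: conv ennreal_mult[symmetric] sum_ennreal)
  also have "\<dots> \<le> (\<integral>\<^sup>+y. ennreal (f y - fstar) \<partial>signsgd_law G x0 \<gamma> K) + (\<Sum>k<K. ennreal (\<gamma> k) * r k)"
    by simp
  also note T
  also have "ennreal (f x0 - fstar) + (\<Sum>k<K. ennreal ((\<gamma> k)^2 * C)) = ennreal (f x0 - fstar + (\<Sum>k<K. (\<gamma> k)^2 * C))"
    using lower[of x0] C by (simp add: ennreal_plus sum_nonneg)
  finally have "(\<Sum>k<K. \<gamma> k * exp_rho_norm G g x0 \<gamma> k) \<le> f x0 - fstar + (\<Sum>k<K. (\<gamma> k)^2 * C)"
    using lower[of x0] C by (subst (asm) ennreal_le_iff) (auto intro!: add_nonneg_nonneg sum_nonneg)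
  then show ?thesis by (simp add: C_def sum_distrib_right sum_divide_distrib)
qed

end

lemma harm_bound: "(\<Sum>k<Suc n. 1 / (real k + 1)) \<le> 1 + ln (real (Suc n))"
proof (induction n)
  case 0
  then show ?case by simp
next
  case (Suc n)
  have "ln ((real n + 1) / (real n + 2)) \<le> (real n + 1) / (real n + 2) - 1"
    by (rule ln_le_minus_one) simp
  also have "\<dots> = - (1 / (real n + 2))" by (simp add: field_simps)
  finally have "1 / (real n + 2) \<le> ln (real n + 2) - ln (real n + 1)"
    by (simp add: ln_div)
  then have "1 / (real (Suc n) + 1) \<le> ln (real (Suc (Suc n))) - ln (real (Suc n))"
    by (simp add: add.commute)
  then show ?case using Suc.IH by simp
qed

lemma ln2_ge: "ln (2::real) \<ge> 1/2"
proof -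
  have "ln (1/2::real) \<le> 1/2 - 1" by (rule ln_le_minus_one) simp
  then show ?thesis by (simp add: ln_div)
qed

theorem theorem1:
  fixes f :: "real^'n \<Rightarrow> real"
    and g :: "real^'n \<Rightarrow> real^'n"
    and G :: "real^'n \<Rightarrow> (real^'n) measure"
    and L :: "'n \<Rightarrow> real"
    and fstar :: real
    and x0 :: "real^'n"
  assumes grad: "\<And>x. (f has_derivative (\<lambda>h. g x \<bullet> h)) (at x)"
    and lower: "\<And>x. f x \<ge> fstar"
    and L_nonneg: "\<And>i. L i \<ge> 0"
    and smooth: "\<And>x y. f y \<le> f x + g x \<bullet> (y - x) + (\<Sum>i\<in>UNIV. L i / 2 * (y $ i - x $ i)^2)"
    and G_kernel: "G \<in> borel \<rightarrow>\<^sub>M prob_algebra borel"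
    and SPB: "\<And>x i. g x $ i \<noteq> 0 \<Longrightarrow> succ_prob G g x i > 1/2"
  shows
    "(let d = real CARD('n); Lbar = (\<Sum>i\<in>UNIV. L i) / d in
      (\<forall>\<gamma>0 > 0. \<forall>K::nat. K \<ge> 2 \<longrightarrow>
         Min ((\<lambda>k. exp_rho_norm G g x0 (\<lambda>k. \<gamma>0 / sqrt (real k + 1)) k) ` {..<K})
           \<le> (f x0 - fstar) / (\<gamma>0 * sqrt (real K))
              + 3 * \<gamma>0 * d * Lbar / 2 * (ln (real K) / sqrt (real K)))
    \<and> (\<forall>\<gamma> > 0. \<forall>K::nat. K \<ge> 1 \<longrightarrow>
         (1 / real K) * (\<Sum>k<K. exp_rho_norm G g x0 (\<lambda>_. \<gamma>) k)
           \<le> (f x0 - fstar) / (\<gamma> * real K) + \<gamma> * d * Lbar / 2))"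
proof -
  have RB: "(\<Sum>k<K. \<gamma> k * exp_rho_norm G g x0 \<gamma> k) \<le> f x0 - fstar + (\<Sum>k<K. (\<gamma> k)^2) * ((\<Sum>i\<in>UNIV. L i) / 2)"
    if pos: "\<And>k. \<gamma> k > 0" for \<gamma> K
    using grad lower L_nonneg smooth G_kernel SPB pos by (rule real_bound)
  have EN: "exp_rho_norm G g x0 \<gamma> k \<ge> 0" for \<gamma> k
    using grad lower L_nonneg smooth G_kernel SPB by (rule exp_nonneg)
  define d where "d = real CARD('n)"
  define C where "C = (\<Sum>i\<in>UNIV. L i) / 2"
  have d: "d > 0" unfolding d_def by simp
  have C: "C \<ge> 0" unfolding C_def using L_nonneg by (simp add: sum_nonneg)
  have dL: "d * ((\<Sum>i\<in>UNIV. L i) / d) = 2 * C" using d by (simp add: C_def)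
  define h where "h = f x0 - fstar"
  have h: "h \<ge> 0" using lower[of x0] by (simp add: h_def)
  have partA: "Min ((\<lambda>k. exp_rho_norm G g x0 (\<lambda>k. \<gamma>0 / sqrt (real k + 1)) k) ` {..<K})
           \<le> h / (\<gamma>0 * sqrt (real K)) + 3 * \<gamma>0 * C * (ln (real K) / sqrt (real K))"
    if g0: "\<gamma>0 > 0" and K: "K \<ge> 2" for \<gamma>0 :: real and K :: nat
  proof -
    define \<gamma> where "\<gamma> = (\<lambda>k::nat. \<gamma>0 / sqrt (real k + 1))"
    define E where "E k = exp_rho_norm G g x0 \<gamma> k" for k
    define M where "M = Min (E ` {..<K})"
    have pos: "\<And>k. \<gamma> k > 0" using g0 by (simp add: \<gamma>_def)
    have Ene: "E ` {..<K} \<noteq> {}" using K by (simp add: lessThan_empty_iff)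
    have ME: "M \<le> E k" if "k < K" for k unfolding M_def using that by (intro Min_le) auto
    have M0: "M \<ge> 0" unfolding M_def using Ene EN by (simp add: E_def)
    have sK: "sqrt (real K) > 0" using K by simp
    have gk: "\<gamma> k \<ge> \<gamma>0 / sqrt (real K)" if "k < K" for k
    proof -
      have "sqrt (real k + 1) \<le> sqrt (real K)" using that by simp
      then show ?thesis unfolding \<gamma>_def using g0 by (intro divide_left_mono) auto
    qed
    have sumg: "\<gamma>0 * sqrt (real K) \<le> (\<Sum>k<K. \<gamma> k)"
    proof -
      have "(\<Sum>k<K. \<gamma>0 / sqrt (real K)) \<le> (\<Sum>k<K. \<gamma> k)" by (intro sum_mono gk) simp
      moreover have "(\<Sum>k<K. \<gamma>0 / sqrt (real K)) = \<gamma>0 * sqrt (real K)"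
        using sK by (simp add: field_simps)
      ultimately show ?thesis by simp
    qed
    have sumg2: "(\<Sum>k<K. (\<gamma> k)^2) \<le> \<gamma>0^2 * (1 + ln (real K))"
    proof -
      have "(\<Sum>k<K. (\<gamma> k)^2) = \<gamma>0^2 * (\<Sum>k<K. 1 / (real k + 1))"
        unfolding \<gamma>_def by (simp add: power_divide sum_distrib_left)
      also have "\<dots> \<le> \<gamma>0^2 * (1 + ln (real K))"
        using harm_bound[of "K - 1"] K by (intro mult_left_mono) auto
      finally show ?thesis .
    qed
    have "M * (\<gamma>0 * sqrt (real K)) \<le> M * (\<Sum>k<K. \<gamma> k)" using sumg M0 by (rule mult_left_mono)
    also have "\<dots> = (\<Sum>k<K. \<gamma> k * M)" by (simp add: sum_distrib_left mult.commute)
    also have "\<dots> \<le> (\<Sum>k<K. \<gamma> k * E k)"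
      using pos ME by (intro sum_mono mult_left_mono) (auto simp: less_imp_le)
    also have "\<dots> \<le> h + (\<Sum>k<K. (\<gamma> k)^2) * C"
      using RB[of \<gamma> K, OF pos] by (simp add: E_def h_def C_def)
    also have "\<dots> \<le> h + \<gamma>0^2 * (1 + ln (real K)) * C"
      using sumg2 C by (intro add_left_mono mult_right_mono) auto
    also have "\<dots> \<le> h + \<gamma>0^2 * (3 * ln (real K)) * C"
    proof -
      have "ln (2::real) \<le> ln (real K)" using K by simp
      then have "1 + ln (real K) \<le> 3 * ln (real K)" using ln2_ge by linarith
      then show ?thesis using C by (intro add_left_mono mult_right_mono mult_left_mono) auto
    qed
    finally have ineq: "M * (\<gamma>0 * sqrt (real K)) \<le> h + \<gamma>0^2 * (3 * ln (real K)) * C" .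
    have "M \<le> (h + \<gamma>0^2 * (3 * ln (real K)) * C) / (\<gamma>0 * sqrt (real K))"
      using ineq g0 sK by (simp add: pos_le_divide_eq)
    also have "\<dots> = h / (\<gamma>0 * sqrt (real K)) + 3 * \<gamma>0 * C * (ln (real K) / sqrt (real K))"
      using g0 sK by (simp add: field_simps power2_eq_square)
    finally show ?thesis unfolding M_def E_def \<gamma>_def .
  qed
  have partB: "(1 / real K) * (\<Sum>k<K. exp_rho_norm G g x0 (\<lambda>_. \<gamma>) k)
           \<le> h / (\<gamma> * real K) + \<gamma> * C"
    if g0: "\<gamma> > 0" and K: "K \<ge> 1" for \<gamma> :: real and K :: nat
  proof -
    have pos: "\<And>k. (\<lambda>_. \<gamma>) k > 0" using g0 by simp
    have "(\<Sum>k<K. \<gamma> * exp_rho_norm G g x0 (\<lambda>_. \<gamma>) k) \<le> h + (\<Sum>k<K. \<gamma>^2) * C"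
      using RB[of "\<lambda>_. \<gamma>" K, OF pos] by (simp add: h_def C_def)
    then have "\<gamma> * (\<Sum>k<K. exp_rho_norm G g x0 (\<lambda>_. \<gamma>) k) \<le> h + real K * \<gamma>^2 * C"
      by (simp add: sum_distrib_left)
    then have "(\<Sum>k<K. exp_rho_norm G g x0 (\<lambda>_. \<gamma>) k) \<le> (h + real K * \<gamma>^2 * C) / \<gamma>"
      using g0 by (simp add: pos_le_divide_eq mult.commute)
    then have "(1 / real K) * (\<Sum>k<K. exp_rho_norm G g x0 (\<lambda>_. \<gamma>) k) \<le> (1 / real K) * ((h + real K * \<gamma>^2 * C) / \<gamma>)"
      using K by (intro mult_left_mono) auto
    also have "\<dots> = h / (\<gamma> * real K) + \<gamma> * C"
      using g0 K by (simp add: field_simps power2_eq_square)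
    finally show ?thesis .
  qed
  show ?thesis
    unfolding Let_def d_def[symmetric]
  proof (intro conjI allI impI)
    fix \<gamma>0 :: real and K :: nat assume "\<gamma>0 > 0" "K \<ge> 2"
    show "Min ((\<lambda>k. exp_rho_norm G g x0 (\<lambda>k. \<gamma>0 / sqrt (real k + 1)) k) ` {..<K})
           \<le> (f x0 - fstar) / (\<gamma>0 * sqrt (real K))
              + 3 * \<gamma>0 * d * ((\<Sum>i\<in>UNIV. L i) / d) / 2 * (ln (real K) / sqrt (real K))"
    proof -
      have e: "3 * \<gamma>0 * d * ((\<Sum>i\<in>UNIV. L i) / d) / 2 * (ln (real K) / sqrt (real K)) = 3 * \<gamma>0 * C * (ln (real K) / sqrt (real K))"
        using d unfolding C_def by simp
      show ?thesis unfolding e using partA[of \<gamma>0 K] \<open>\<gamma>0 > 0\<close> \<open>K \<ge> 2\<close> by (simp add: h_def)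
    qed
  next
    fix \<gamma> :: real and K :: nat assume "\<gamma> > 0" "K \<ge> 1"
    show "(1 / real K) * (\<Sum>k<K. exp_rho_norm G g x0 (\<lambda>_. \<gamma>) k)
           \<le> (f x0 - fstar) / (\<gamma> * real K) + \<gamma> * d * ((\<Sum>i\<in>UNIV. L i) / d) / 2"
    proof -
      have e: "\<gamma> * d * ((\<Sum>i\<in>UNIV. L i) / d) / 2 = \<gamma> * C"
        using d unfolding C_def by simp
      show ?thesis unfolding e using partB[of \<gamma> K] \<open>\<gamma> > 0\<close> \<open>K \<ge> 1\<close> by (simp add: h_def)
    qed
  qed
qed

end
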